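(* Let $P$ be a poset. If $P$ is well-quasi-ordered and the set $\mathcal{J}^{\neg\downarrow}(P)$ of non-principal ideals of $P$ is a chain under inclusion, then $P$ is better-quasi-ordered.
   Context: An ideal of $P$ is a nonempty initial segment of $P$ which is up-directed; it is principal if it has a largest element. A quasi-ordered set is well-quasi-ordered (wqo) if it is well-founded and has no infinite antichain. Barriers and bqo: finite subsets of $\mathbb{N}$ are identified with their increasing enumerations. For finite $s,t\subseteq\mathbb{N}$ write $s\triangleleft t$ if there is a finite $r\subseteq\mathbb{N}$ such that $s$ is a proper initial segment of $r$ and $t$ is $r$ with its least element removed. A barrier is an infinite set $B$ of finite subsets of $\mathbb{N}$, no member of which is a proper subset of another, such that every infinite $X\subseteq\bigcup B$ has a nonempty initial segment belonging to $B$. A barrier is well-ordered by the lexicographic order; its order type is the type of this well-order. A map $f$ from a barrier $B$ into a quasi-ordered set $Q$ is good if there exist $s,t\in B$ with $s\triangleleft t$ and $f(s)\leq f(t)$, and bad otherwise. For a countable ordinal $\alpha$, $Q$ is $\alpha$-bqo if every map from a barrier of order type at most $\alpha$ into $Q$ is good; $Q$ is better-quasi-ordered (bqo) if it is $\alpha$-bqo for every countable ordinal $\alpha$. *)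

theory Defs
  imports Main
begin

definition ideal_of :: "'a::order set \<Rightarrow> 'a set \<Rightarrow> bool" where
  "ideal_of P I \<longleftrightarrow> I \<subseteq> P \<and> I \<noteq> {} \<and>
     (\<forall>x\<in>I. \<forall>y\<in>P. y \<le> x \<longrightarrow> y \<in> I) \<and>
     (\<forall>x\<in>I. \<forall>y\<in>I. \<exists>z\<in>I. x \<le> z \<and> y \<le> z)"

definition principal_ideal :: "'a::order set \<Rightarrow> bool" where
  "principal_ideal I \<longleftrightarrow> (\<exists>m\<in>I. \<forall>x\<in>I. x \<le> m)"

definition nonprincipal_ideals :: "'a::order set \<Rightarrow> 'a set set" where
  "nonprincipal_ideals P = {I. ideal_of P I \<and> \<not> principal_ideal I}"

definition is_chain_incl :: "'b set set \<Rightarrow> bool" where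
  "is_chain_incl S \<longleftrightarrow> (\<forall>I\<in>S. \<forall>J\<in>S. I \<subseteq> J \<or> J \<subseteq> I)"

definition wqo_on :: "'a::order set \<Rightarrow> bool" where
  "wqo_on P \<longleftrightarrow> wf {(x, y). x \<in> P \<and> y \<in> P \<and> x < y} \<and>
     (\<forall>A \<subseteq> P. (\<forall>x\<in>A. \<forall>y\<in>A. x \<noteq> y \<longrightarrow> \<not> x \<le> y) \<longrightarrow> finite A)"

definition init_seg :: "nat set \<Rightarrow> nat set \<Rightarrow> bool" where
  "init_seg s X \<longleftrightarrow> s \<subseteq> X \<and> (\<forall>x\<in>s. \<forall>y\<in>X. y < x \<longrightarrow> y \<in> s)"

definition shift_rel :: "nat set \<Rightarrow> nat set \<Rightarrow> bool" (infix "\<lhd>" 50) where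
  "s \<lhd> t \<longleftrightarrow> (\<exists>r. finite r \<and> init_seg s r \<and> s \<noteq> r \<and> t = r - {Min r})"

definition barrier :: "nat set set \<Rightarrow> bool" where
  "barrier B \<longleftrightarrow> infinite B \<and> (\<forall>s\<in>B. finite s) \<and>
     (\<forall>s\<in>B. \<forall>t\<in>B. \<not> s \<subset> t) \<and>
     (\<forall>X. X \<subseteq> \<Union>B \<and> infinite X \<longrightarrow>
        (\<exists>s\<in>B. s \<noteq> {} \<and> finite s \<and> init_seg s X))"

definition good_map :: "nat set set \<Rightarrow> (nat set \<Rightarrow> 'a::order) \<Rightarrow> bool" where
  "good_map B f \<longleftrightarrow> (\<exists>s\<in>B. \<exists>t\<in>B. s \<lhd> t \<and> f s \<le> f t)"

definition bqo_on :: "'a::order set \<Rightarrow> bool" where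
  "bqo_on P \<longleftrightarrow> (\<forall>B f. barrier B \<and> f ` B \<subseteq> P \<longrightarrow> good_map B f)"

end

theory Submission
  imports Defs "HOL-Library.Ramsey"
begin
lemma wqo_good_seq:
  fixes P :: "'a::order set" and x :: "nat \<Rightarrow> 'a"
  assumes w: "wqo_on P" and xP: "\<And>i. x i \<in> P"
  shows "\<exists>i j. i < j \<and> x i \<le> x j"
proof (rule ccontr)
  assume bad: "\<not> (\<exists>i j. i < j \<and> x i \<le> x j)"
  define c where "c = (\<lambda>S::nat set. if x (Max S) < x (Min S) then 0 else (1::nat))"
  have "\<forall>a\<in>(UNIV::nat set). \<forall>b\<in>UNIV. a \<noteq> b \<longrightarrow> c {a, b} < 2" by (simp add: c_def)
  then obtain Y t where Y: "infinite Y" "t < 2" and hom: "\<forall>a\<in>Y. \<forall>b\<in>Y. a\<noteq>b \<longrightarrow> c {a, b} = t"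
    using Ramsey2[of "UNIV::nat set" c 2] by auto
  have ij: "c {i, j} = (if x j < x i then 0 else 1)" if "i < j" for i j
    using that by (simp add: c_def max_def min_def)
  show False
  proof (cases "t = 0")
    case True
    define e where "e = enumerate Y"
    have sm: "strict_mono e" using Y(1) by (simp add: e_def strict_mono_enumerate)
    have eY: "e k \<in> Y" for k using Y(1) by (simp add: e_def enumerate_in_set)
    have "x (e (Suc k)) < x (e k)" for k
    proof -
      have "e k < e (Suc k)" using sm by (simp add: strict_mono_def)
      moreover have "c {e k, e (Suc k)} = 0" using hom eY True \<open>e k < e (Suc k)\<close> by auto
      ultimately show ?thesis using ij by (auto split: if_splits)
    qed
    hence "((x \<circ> e) (Suc k), (x \<circ> e) k) \<in> {(a, b). a \<in> P \<and> b \<in> P \<and> a < b}" for k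
      using xP by auto
    moreover have "wf {(a, b). a \<in> P \<and> b \<in> P \<and> a < b}" using w by (simp add: wqo_on_def)
    ultimately show False using wf_iff_no_infinite_down_chain by blast
  next
    case False
    hence t1: "t = 1" using Y(2) by auto
    have anti: "\<forall>a\<in>x ` Y. \<forall>b\<in>x ` Y. a \<noteq> b \<longrightarrow> \<not> a \<le> b"
    proof (intro ballI impI)
      fix a b assume "a \<in> x ` Y" "b \<in> x ` Y" "a \<noteq> b"
      then obtain i j where ij': "i \<in> Y" "j \<in> Y" "a = x i" "b = x j" by auto
      with \<open>a \<noteq> b\<close> have "i \<noteq> j" by auto
      show "\<not> a \<le> b"
      proof (cases "i < j")
        case True thus ?thesis using bad ij' by auto
      next
        case False
        hence "j < i" using \<open>i \<noteq> j\<close> by auto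
        hence "c {j, i} = 1" using hom ij' t1 by auto
        hence "\<not> x i < x j" using ij[OF \<open>j < i\<close>] by (metis zero_neq_one)
        thus ?thesis using ij' \<open>a \<noteq> b\<close> by auto
      qed
    qed
    have "x ` Y \<subseteq> P" using xP by auto
    hence "finite (x ` Y)" using w anti by (simp add: wqo_on_def)
    moreover have "inj_on x Y"
    proof (rule inj_onI)
      fix i j assume "i \<in> Y" "j \<in> Y" "x i = x j"
      thus "i = j" using bad by (metis linorder_neqE_nat order_refl)
    qed
    ultimately show False using Y(1) finite_imageD by blast
  qed
qed

definition above :: "nat set \<Rightarrow> nat \<Rightarrow> bool" where
  "above s n \<longleftrightarrow> (\<forall>x\<in>s. x < n)"

definition tailS :: "nat set \<Rightarrow> nat set \<Rightarrow> nat set" where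
  "tailS s M = {n\<in>M. above s n}"

lemma tailS_sub: "tailS s M \<subseteq> M" by (auto simp: tailS_def)

lemma tailS_empty[simp]: "tailS {} M = M" by (auto simp: tailS_def above_def)

lemma infinite_tailS:
  assumes "infinite M" "finite s" shows "infinite (tailS s M)"
proof -
  have "M \<subseteq> tailS s M \<union> {..Max s}"
  proof
    fix n assume n: "n \<in> M"
    show "n \<in> tailS s M \<union> {..Max s}"
    proof (cases "above s n")
      case True thus ?thesis using n by (simp add: tailS_def)
    next
      case False
      then obtain x where "x \<in> s" "n \<le> x" unfolding above_def by (auto simp: not_less)
      hence "n \<le> Max s" using Max_ge[OF assms(2)] order.trans by blast
      thus ?thesis by simp
    qed
  qed
  hence "infinite (tailS s M \<union> {..Max s})" using assms(1) finite_subset by blast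
  thus ?thesis by simp
qed

lemma init_seg_comp: "init_seg a X \<Longrightarrow> init_seg b X \<Longrightarrow> a \<subseteq> b \<or> b \<subseteq> a"
  unfolding init_seg_def by (metis linorder_neqE_nat subsetD subsetI)

lemma init_seg_sub: "init_seg a X \<Longrightarrow> a \<subseteq> b \<Longrightarrow> b \<subseteq> X \<Longrightarrow> init_seg a b"
  unfolding init_seg_def by blast

lemma init_seg_trans: "init_seg a b \<Longrightarrow> init_seg b X \<Longrightarrow> init_seg a X"
  unfolding init_seg_def by blast

lemma init_seg_refl: "init_seg X X"
  unfolding init_seg_def by blast

lemma init_seg_Un: "(\<And>y. y \<in> Y \<Longrightarrow> above s y) \<Longrightarrow> init_seg s (s \<union> Y)"
  unfolding init_seg_def above_def by force

lemma init_seg_tailS: "init_seg s (s \<union> tailS s Y)"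
  by (rule init_seg_Un) (auto simp: tailS_def)

lemma fusion_fin:
  assumes hered: "\<And>s M M'. M \<subseteq> N \<Longrightarrow> Q s M \<Longrightarrow> M' \<subseteq> M \<Longrightarrow> infinite M' \<Longrightarrow> Q s M'"
    and ex: "\<And>s M. finite s \<Longrightarrow> M \<subseteq> N \<Longrightarrow> infinite M \<Longrightarrow> \<exists>M'\<subseteq>M. infinite M' \<and> Q s M'"
  shows "finite S \<Longrightarrow> (\<forall>s\<in>S. finite s) \<Longrightarrow> M \<subseteq> N \<Longrightarrow> infinite M \<Longrightarrow> \<exists>M'\<subseteq>M. infinite M' \<and> (\<forall>s\<in>S. Q s M')"
proof (induction S arbitrary: M rule: finite_induct)
  case empty thus ?case by auto
next
  case (insert s S)
  have fS: "\<forall>s\<in>S. finite s" "finite s" using insert.prems(1) by auto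
  obtain M1 where M1: "M1 \<subseteq> M" "infinite M1" "\<forall>s\<in>S. Q s M1"
    using insert.IH[OF fS(1) insert.prems(2,3)] by blast
  have M1N: "M1 \<subseteq> N" using M1(1) insert.prems(2) by blast
  obtain M2 where M2: "M2 \<subseteq> M1" "infinite M2" "Q s M2"
    using ex[OF fS(2) M1N M1(2)] by blast
  have "\<forall>s'\<in>S. Q s' M2" using M1(3) M2(1,2) hered[OF M1N] by blast
  thus ?case using M1 M2 by blast
qed

lemma fusion:
  assumes inf: "infinite N"
    and hered: "\<And>s M M'. M \<subseteq> N \<Longrightarrow> Q s M \<Longrightarrow> M' \<subseteq> M \<Longrightarrow> infinite M' \<Longrightarrow> Q s M'"
    and ex: "\<And>s M. finite s \<Longrightarrow> M \<subseteq> N \<Longrightarrow> infinite M \<Longrightarrow> \<exists>M'\<subseteq>M. infinite M' \<and> Q s M'"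
  shows "\<exists>N'\<subseteq>N. infinite N' \<and> (\<forall>s. finite s \<longrightarrow> s \<subseteq> N' \<longrightarrow> Q s (tailS s N'))"
proof -
  define lst where "lst = (\<lambda>M::nat set. LEAST n. n \<in> M)"
  define good where "good = (\<lambda>M M'. M' \<subseteq> M - {lst M} \<and> infinite M' \<and> (\<forall>s. s \<subseteq> {..lst M} \<longrightarrow> Q s M'))"
  define step where "step = (\<lambda>M. SOME M'. good M M')"
  obtain M0 where M0: "M0 \<subseteq> N" "infinite M0" "Q {} M0" using ex[of "{}" N] inf by auto
  define Ms where "Ms = (\<lambda>k. (step ^^ k) M0)"
  have stepok: "good M (step M)" if "M \<subseteq> N" "infinite M" for M
  proof -
    have "M - {lst M} \<subseteq> N" "infinite (M - {lst M})" using that by auto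
    moreover have "finite (Pow {..lst M})" by simp
    moreover have "\<forall>s\<in>Pow {..lst M}. finite s" by (meson PowD finite_atMost finite_subset)
    ultimately have "\<exists>M'\<subseteq>M - {lst M}. infinite M' \<and> (\<forall>s\<in>Pow {..lst M}. Q s M')"
      by (intro fusion_fin[OF hered ex])
    then obtain M' where "M' \<subseteq> M - {lst M}" "infinite M'" "\<forall>s\<in>Pow {..lst M}. Q s M'"
      by blast
    hence "\<exists>M'. good M M'" unfolding good_def by auto
    thus ?thesis unfolding step_def by (rule someI_ex)
  qed
  have inv: "Ms k \<subseteq> N \<and> infinite (Ms k)" for k
  proof (induction k)
    case 0 thus ?case using M0 by (simp add: Ms_def)
  next
    case (Suc k)
    have "Ms (Suc k) = step (Ms k)" by (simp add: Ms_def)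
    thus ?case using stepok[of "Ms k"] Suc by (auto simp: good_def)
  qed
  have gs: "good (Ms k) (Ms (Suc k))" for k
    using stepok[of "Ms k"] inv[of k] by (simp add: Ms_def)
  define nk where "nk = (\<lambda>k. lst (Ms k))"
  have nkin: "nk k \<in> Ms k" for k
    using inv[of k] unfolding nk_def lst_def by (metis LeastI finite.emptyI ex_in_conv)
  have nkle: "nk k \<le> m" if "m \<in> Ms k" for k m
    using that unfolding nk_def lst_def by (simp add: Least_le)
  have dec: "Ms j \<subseteq> Ms k" if "k \<le> j" for j k
    using that
  proof (induction j)
    case 0 thus ?case by simp
  next
    case (Suc j)
    show ?case
    proof (cases "k = Suc j")
      case True thus ?thesis by simp
    next
      case False
      hence "k \<le> j" using Suc by simp
      thus ?thesis using Suc gs[of j] by (auto simp: good_def)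
    qed
  qed
  have nkSuc: "nk k < nk (Suc k)" for k
  proof -
    have "nk (Suc k) \<in> Ms k - {nk k}" using nkin[of "Suc k"] gs[of k] by (auto simp: good_def nk_def)
    thus ?thesis using nkle[of "nk (Suc k)" k] by auto
  qed
  have sm: "strict_mono nk" using nkSuc by (simp add: strict_mono_Suc_iff)
  define N' where "N' = range nk"
  have N'N: "N' \<subseteq> N" using nkin inv unfolding N'_def by blast
  have infN': "infinite N'" unfolding N'_def using sm by (simp add: infinite_UNIV_nat range_inj_infinite strict_mono_imp_inj_on)
  have N'M0: "N' \<subseteq> M0" using nkin dec[of 0] unfolding N'_def by (auto simp: Ms_def)
  have "Q s (tailS s N')" if "finite s" "s \<subseteq> N'" for s
  proof (cases "s = {}")
    case True
    thus ?thesis using hered[OF M0(1) M0(3) N'M0 infN'] by simp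
  next
    case False
    hence "Max s \<in> N'" using that Max_in by blast
    then obtain k where k: "Max s = nk k" unfolding N'_def by auto
    have ssub: "s \<subseteq> {..lst (Ms k)}" using that k Max_ge by (fastforce simp: nk_def)
    have Q1: "Q s (Ms (Suc k))" using gs[of k] ssub by (auto simp: good_def)
    have "tailS s N' \<subseteq> Ms (Suc k)"
    proof
      fix n assume "n \<in> tailS s N'"
      then obtain j where j: "n = nk j" "above s n" unfolding tailS_def N'_def by auto
      have "Max s \<in> s" using False that(1) by simp
      hence "nk k < nk j" using j k unfolding above_def by auto
      hence "k < j" using sm by (meson not_less strict_mono_less_eq)
      thus "n \<in> Ms (Suc k)" using j nkin dec[of "Suc k" j] by auto
    qed
    thus ?thesis using hered[OF _ Q1] inv infinite_tailS[OF infN' that(1)] by blast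
  qed
  thus ?thesis using N'N infN' by blast
qed


lemma galvin:
  fixes F :: "nat set set"
  assumes infM: "infinite M" and finF: "\<forall>t\<in>F. finite t"
  shows "\<exists>N\<subseteq>M. infinite N \<and> ((\<forall>t\<in>F. \<not> t \<subseteq> N) \<or> (\<forall>Y\<subseteq>N. infinite Y \<longrightarrow> (\<exists>t\<in>F. init_seg t Y)))"
proof -
  define acc where "acc = (\<lambda>s A. \<forall>Y\<subseteq>A. infinite Y \<longrightarrow> (\<exists>t\<in>F. init_seg t (s \<union> tailS s Y)))"
  define rej where "rej = (\<lambda>s A. \<forall>A'\<subseteq>A. infinite A' \<longrightarrow> \<not> acc s A')"
  have acch: "acc s A'" if "acc s A" "A' \<subseteq> A" for s A A' using that unfolding acc_def by blast
  have rejh: "rej s A'" if "rej s A" "A' \<subseteq> A" for s A A' using that unfolding rej_def by blast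
  obtain N1 where N1: "N1 \<subseteq> M" "infinite N1"
     and dec1: "\<And>s. finite s \<Longrightarrow> s \<subseteq> N1 \<Longrightarrow> acc s (tailS s N1) \<or> rej s (tailS s N1)"
  proof -
    have "\<exists>N'\<subseteq>M. infinite N' \<and> (\<forall>s. finite s \<longrightarrow> s \<subseteq> N' \<longrightarrow> (acc s (tailS s N') \<or> rej s (tailS s N')))"
    proof (rule fusion[OF infM, where Q="\<lambda>s A. acc s A \<or> rej s A"])
      show "acc s M' \<or> rej s M'" if "acc s A \<or> rej s A" "M' \<subseteq> A" for s A M'
        using that acch rejh by blast
      show "\<exists>M'\<subseteq>A. infinite M' \<and> (acc s M' \<or> rej s M')" if "infinite A" for s A
      proof (cases "rej s A")
        case True thus ?thesis using that by blast
      next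
        case False thus ?thesis unfolding rej_def by blast
      qed
    qed
    thus ?thesis using that by blast
  qed
  define T where "T = (\<lambda>s. tailS s N1)"
  show ?thesis
  proof (cases "acc {} N1")
    case True
    have "\<forall>Y\<subseteq>N1. infinite Y \<longrightarrow> (\<exists>t\<in>F. init_seg t Y)"
      using True unfolding acc_def by simp
    thus ?thesis using N1 by blast
  next
    case False
    hence rej0: "rej {} N1" using dec1[of "{}"] by simp
    have key: "finite {n \<in> T s. acc (insert n s) (T (insert n s))}"
      if s: "finite s" "s \<subseteq> N1" "rej s (T s)" for s
    proof (rule ccontr)
      define Ys where "Ys = {n \<in> T s. acc (insert n s) (T (insert n s))}"
      assume "infinite {n \<in> T s. acc (insert n s) (T (insert n s))}"
      hence infY: "infinite Ys" by (simp add: Ys_def)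
      have YT: "Ys \<subseteq> T s" by (auto simp: Ys_def)
      have "acc s Ys" unfolding acc_def
      proof (intro allI impI)
        fix Z assume Z: "Z \<subseteq> Ys" "infinite Z"
        define n where "n = (LEAST n. n \<in> Z)"
        have nZ: "n \<in> Z" unfolding n_def using Z by (metis LeastI finite.emptyI ex_in_conv)
        have nle: "n \<le> z" if "z \<in> Z" for z unfolding n_def using that by (simp add: Least_le)
        have nY: "n \<in> Ys" using nZ Z by auto
        hence accn: "acc (insert n s) (T (insert n s))" by (simp add: Ys_def)
        have abZ: "above s z" if "z \<in> Z" for z using that Z YT by (auto simp: T_def tailS_def)
        have Z'sub: "Z - {n} \<subseteq> T (insert n s)"
        proof
          fix z assume z: "z \<in> Z - {n}"
          hence "n < z" using nle by force
          moreover have "z \<in> N1" using z Z YT by (auto simp: T_def tailS_def)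
          ultimately show "z \<in> T (insert n s)" using abZ z by (auto simp: T_def tailS_def above_def)
        qed
        have "infinite (Z - {n})" using Z by simp
        then obtain t where t: "t \<in> F" "init_seg t (insert n s \<union> tailS (insert n s) (Z - {n}))"
          using accn Z'sub unfolding acc_def by blast
        have "tailS (insert n s) (Z - {n}) = Z - {n}"
          using Z'sub by (auto simp: T_def tailS_def)
        moreover have "tailS s Z = Z" using abZ by (auto simp: tailS_def)
        ultimately have "insert n s \<union> tailS (insert n s) (Z - {n}) = s \<union> tailS s Z" using nZ by auto
        thus "\<exists>t\<in>F. init_seg t (s \<union> tailS s Z)" using t by auto
      qed
      thus False using s(3) infY YT unfolding rej_def by meson
    qed
    obtain N2 where N2: "N2 \<subseteq> N1" "infinite N2"
      and step2: "\<And>s. finite s \<Longrightarrow> s \<subseteq> N2 \<Longrightarrow> (finite s \<and> s \<subseteq> N1 \<and> rej s (T s)) \<longrightarrow>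
             (\<forall>n\<in>tailS s N2. above s n \<longrightarrow> rej (insert n s) (T (insert n s)))"
    proof -
      have "\<exists>N'\<subseteq>N1. infinite N' \<and> (\<forall>s. finite s \<longrightarrow> s \<subseteq> N' \<longrightarrow> ((finite s \<and> s \<subseteq> N1 \<and> rej s (T s)) \<longrightarrow>
             (\<forall>n\<in>tailS s N'. above s n \<longrightarrow> rej (insert n s) (T (insert n s)))))"
      proof (rule fusion[OF N1(2), where Q="\<lambda>s A. (finite s \<and> s \<subseteq> N1 \<and> rej s (T s)) \<longrightarrow>
             (\<forall>n\<in>A. above s n \<longrightarrow> rej (insert n s) (T (insert n s)))"])
        show "(finite s \<and> s \<subseteq> N1 \<and> rej s (T s)) \<longrightarrow> (\<forall>n\<in>M'. above s n \<longrightarrow> rej (insert n s) (T (insert n s)))"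
          if "(finite s \<and> s \<subseteq> N1 \<and> rej s (T s)) \<longrightarrow> (\<forall>n\<in>A. above s n \<longrightarrow> rej (insert n s) (T (insert n s)))"
             "M' \<subseteq> A" for s A M'
          using that by blast
        show "\<exists>M'\<subseteq>A. infinite M' \<and> ((finite s \<and> s \<subseteq> N1 \<and> rej s (T s)) \<longrightarrow>
             (\<forall>n\<in>M'. above s n \<longrightarrow> rej (insert n s) (T (insert n s))))"
          if "A \<subseteq> N1" "infinite A" for s A
        proof (cases "finite s \<and> s \<subseteq> N1 \<and> rej s (T s)")
          case False thus ?thesis using that by blast
        next
          case True
          define A' where "A' = A - {n \<in> T s. acc (insert n s) (T (insert n s))}"
          have "infinite A'" unfolding A'_def using key True that(2) by (meson Diff_infinite_finite)
          moreover have "rej (insert n s) (T (insert n s))" if "n \<in> A'" "above s n" for n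
          proof -
            have n: "n \<in> A" "\<not> (n \<in> T s \<and> acc (insert n s) (T (insert n s)))"
              using that by (auto simp: A'_def)
            have "n \<in> T s" using n \<open>A \<subseteq> N1\<close> that(2) by (auto simp: T_def tailS_def)
            hence "\<not> acc (insert n s) (T (insert n s))" using n by blast
            moreover have "finite (insert n s)" "insert n s \<subseteq> N1" using True n \<open>A \<subseteq> N1\<close> by auto
            ultimately show ?thesis using dec1 unfolding T_def by blast
          qed
          ultimately show ?thesis unfolding A'_def by blast
        qed
      qed
      thus ?thesis using that by blast
    qed
    have allrej: "\<forall>s. finite s \<and> s \<subseteq> N2 \<and> card s = k \<longrightarrow> rej s (T s)" for k
    proof (induction k rule: less_induct)
      case (less k)
      show ?case
      proof (intro allI impI)
        fix s assume s: "finite s \<and> s \<subseteq> N2 \<and> card s = k"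
        show "rej s (T s)"
        proof (cases "s = {}")
          case True thus ?thesis using rej0 by (simp add: T_def)
        next
          case False
          define m where "m = Max s"
          define s0 where "s0 = s - {m}"
          have ms: "m \<in> s" using False s by (simp add: m_def)
          have "card s > 0" using ms s by (auto simp: card_gt_0_iff)
          hence cs0: "card s0 < k" using ms s by (simp add: s0_def)
          have fs0: "finite s0" "s0 \<subseteq> N2" using s by (auto simp: s0_def)
          hence r0: "rej s0 (T s0)" using less cs0 by blast
          have mt2: "above s0 m"
            using ms s Max_ge[of s] unfolding above_def s0_def m_def
            by (metis Diff_iff le_neq_implies_less singletonI)
          have mt: "m \<in> tailS s0 N2" using mt2 ms s by (auto simp: tailS_def)
          moreover have "s0 \<subseteq> N1" using fs0 N2 by auto
          ultimately have "rej (insert m s0) (T (insert m s0))" using step2[OF fs0] r0 fs0 mt2 by blast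
          moreover have "insert m s0 = s" using ms by (auto simp: s0_def)
          ultimately show ?thesis by simp
        qed
      qed
    qed
    have "\<forall>t\<in>F. \<not> t \<subseteq> N2"
    proof (intro ballI notI)
      fix t assume t: "t \<in> F" "t \<subseteq> N2"
      have ft: "finite t" using finF t by auto
      hence "rej t (T t)" using allrej t by blast
      moreover have "infinite (T t)" using infinite_tailS[OF N1(2) ft] by (simp add: T_def)
      moreover have "acc t (T t)" unfolding acc_def using t init_seg_tailS by blast
      ultimately show False unfolding rej_def by blast
    qed
    thus ?thesis using N1 N2 by blast
  qed
qed

lemma init_seg_subset: "init_seg a X \<Longrightarrow> a \<subseteq> X"
  by (simp add: init_seg_def)

lemma init_seg_mem: "init_seg a X \<Longrightarrow> x \<in> a \<Longrightarrow> y \<in> X \<Longrightarrow> y < x \<Longrightarrow> y \<in> a"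
  by (simp add: init_seg_def)

lemma inc_thin:
  fixes \<kappa> :: "nat set \<Rightarrow> 'a::order" and P :: "'a set"
  assumes w: "wqo_on P" and infM: "infinite M"
   and thin: "\<And>w w'. w \<in> D \<Longrightarrow> w' \<in> D \<Longrightarrow> init_seg w w' \<Longrightarrow> w = w'"
   and finD: "\<forall>w\<in>D. finite w"
   and front: "\<And>Y. Y \<subseteq> M \<Longrightarrow> infinite Y \<Longrightarrow> \<exists>w\<in>D. init_seg w Y"
   and vals: "\<And>w. w \<in> D \<Longrightarrow> w \<subseteq> M \<Longrightarrow> \<kappa> w \<in> P"
  shows "\<exists>M'\<subseteq>M. infinite M' \<and> (\<forall>w\<in>D. \<forall>w'\<in>D. w \<subseteq> M' \<longrightarrow> w' \<subseteq> M' \<longrightarrow> (\<forall>y\<in>w'. above w y) \<longrightarrow> \<kappa> w \<le> \<kappa> w')"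
proof -
  define F where "F = {w \<union> w' | w w'. w \<in> D \<and> w' \<in> D \<and> (\<forall>y\<in>w'. above w y) \<and> \<not> \<kappa> w \<le> \<kappa> w'}"
  have finF: "\<forall>t\<in>F. finite t" using finD by (auto simp: F_def)
  obtain N where N: "N \<subseteq> M" "infinite N"
    and alt: "(\<forall>t\<in>F. \<not> t \<subseteq> N) \<or> (\<forall>Y\<subseteq>N. infinite Y \<longrightarrow> (\<exists>t\<in>F. init_seg t Y))"
    using galvin[OF infM finF] by blast
  show ?thesis
  proof (cases "\<forall>t\<in>F. \<not> t \<subseteq> N")
    case True
    have "\<kappa> w \<le> \<kappa> w'" if "w \<in> D" "w' \<in> D" "w \<subseteq> N" "w' \<subseteq> N" "\<forall>y\<in>w'. above w y" for w w'
    proof (rule ccontr)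
      assume "\<not> \<kappa> w \<le> \<kappa> w'"
      hence "w \<union> w' \<in> F" using that by (auto simp: F_def)
      thus False using True that by auto
    qed
    thus ?thesis using N by blast
  next
    case False
    hence all: "\<forall>Y\<subseteq>N. infinite Y \<longrightarrow> (\<exists>t\<in>F. init_seg t Y)" using alt by blast
    define pre where "pre = (\<lambda>Y. SOME w. w \<in> D \<and> init_seg w Y)"
    have pre: "pre Y \<in> D \<and> init_seg (pre Y) Y" if "Y \<subseteq> M" "infinite Y" for Y
    proof -
      have "\<exists>w. w \<in> D \<and> init_seg w Y" using front[OF that] by blast
      thus ?thesis unfolding pre_def by (rule someI_ex)
    qed
    define R where "R = (\<lambda>i. ((\<lambda>A. tailS (pre A) A) ^^ i) N)"
    have R0: "R 0 = N" by (simp add: R_def)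
    have RS: "R (Suc i) = tailS (pre (R i)) (R i)" for i by (simp add: R_def)
    have Rinv: "R i \<subseteq> N \<and> infinite (R i)" for i
    proof (induction i)
      case 0 thus ?case using N by (simp add: R0)
    next
      case (Suc i)
      have "pre (R i) \<in> D" using pre[of "R i"] Suc N by blast
      hence "finite (pre (R i))" using finD by blast
      thus ?case using Suc infinite_tailS[of "R i" "pre (R i)"] tailS_sub[of "pre (R i)" "R i"] unfolding RS by blast
    qed
    define b where "b = (\<lambda>i. pre (R i))"
    have bD: "b i \<in> D" and bseg: "init_seg (b i) (R i)" for i
      using pre[of "R i"] Rinv[of i] N unfolding b_def by blast+
    have Rdec: "R j \<subseteq> R i" if "i \<le> j" for i j
      using that
    proof (induction j)
      case 0 thus ?case by simp
    next
      case (Suc j)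
      thus ?case using tailS_sub RS by (metis le_Suc_eq order_refl order_trans)
    qed
    have Rbey: "above (b i) y" if "y \<in> R j" "i < j" for i j y
    proof -
      have "R j \<subseteq> R (Suc i)" using Rdec that by simp
      thus ?thesis using that by (auto simp: RS tailS_def b_def)
    qed
    have bad: "\<not> \<kappa> (b i) \<le> \<kappa> (b j)" if "i < j" for i j
    proof -
      define Y where "Y = b i \<union> R j"
      have YN: "Y \<subseteq> N" using Y_def Rinv[of i] Rinv[of j] init_seg_subset[OF bseg[of i]] by blast
      have infY: "infinite Y" using Rinv[of j] by (simp add: Y_def)
      obtain t where t: "t \<in> F" "init_seg t Y" using all YN infY by blast
      then obtain w w' where ww: "t = w \<union> w'" "w \<in> D" "w' \<in> D" "\<forall>y\<in>w'. above w y" "\<not> \<kappa> w \<le> \<kappa> w'"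
        unfolding F_def by blast
      have wseg: "init_seg w Y" using init_seg_trans[OF init_seg_Un[of w' w] t(2)[unfolded ww(1)]] ww(4) by blast
      have biseg: "init_seg (b i) Y" unfolding Y_def using Rbey that by (intro init_seg_Un) blast
      have "w = b i"
      proof -
        have "w \<subseteq> b i \<or> b i \<subseteq> w" using init_seg_comp[OF wseg biseg] .
        thus ?thesis
        proof
          assume "w \<subseteq> b i"
          hence "init_seg w (b i)" using init_seg_sub[OF wseg _ init_seg_subset[OF biseg]] by blast
          thus ?thesis using thin ww(2) bD by blast
        next
          assume "b i \<subseteq> w"
          hence "init_seg (b i) w" using init_seg_sub[OF biseg _ init_seg_subset[OF wseg]] by blast
          thus ?thesis using thin ww(2) bD by metis
        qed
      qed
      have w'R: "w' \<subseteq> R j"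
      proof
        fix x assume x: "x \<in> w'"
        hence "x \<in> Y" using init_seg_subset[OF t(2)] ww(1) by blast
        moreover have "x \<notin> b i" using ww(4) x \<open>w = b i\<close> above_def by blast
        ultimately show "x \<in> R j" by (simp add: Y_def)
      qed
      have w'seg: "init_seg w' (R j)"
        unfolding init_seg_def
      proof (intro conjI w'R ballI impI)
        fix x y assume xy: "x \<in> w'" "y \<in> R j" "y < x"
        have "y \<in> Y" using xy by (simp add: Y_def)
        hence "y \<in> t" using init_seg_mem[OF t(2) _ _ xy(3)] xy(1) ww(1) by blast
        moreover have "y \<notin> b i" using Rbey[OF xy(2) that] above_def by blast
        ultimately show "y \<in> w'" using ww(1) \<open>w = b i\<close> by blast
      qed
      have "w' = b j"
      proof -
        have "w' \<subseteq> b j \<or> b j \<subseteq> w'" using init_seg_comp[OF w'seg bseg] .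
        thus ?thesis
        proof
          assume "w' \<subseteq> b j"
          hence "init_seg w' (b j)" using init_seg_sub[OF w'seg _ init_seg_subset[OF bseg]] by blast
          thus ?thesis using thin ww(3) bD by blast
        next
          assume "b j \<subseteq> w'"
          hence "init_seg (b j) w'" using init_seg_sub[OF bseg _ init_seg_subset[OF w'seg]] by blast
          thus ?thesis using thin ww(3) bD by metis
        qed
      qed
      thus ?thesis using ww(5) \<open>w = b i\<close> by simp
    qed
    have "\<kappa> (b i) \<in> P" for i
      using vals[OF bD] init_seg_subset[OF bseg] Rinv N by blast
    then obtain i j where "i < j" "\<kappa> (b i) \<le> \<kappa> (b j)"
      using wqo_good_seq[OF w, of "\<lambda>i. \<kappa> (b i)"] by blast
    thus ?thesis using bad by blast
  qed
qed

definition sigB :: "nat set set \<Rightarrow> nat set \<Rightarrow> nat set" where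
  "sigB B X = (SOME s. s \<in> B \<and> init_seg s X)"

definition shift :: "nat set \<Rightarrow> nat set" where
  "shift X = X - {LEAST n. n \<in> X}"

definition nodeB :: "nat set set \<Rightarrow> nat set \<Rightarrow> bool" where
  "nodeB B u \<longleftrightarrow> (\<exists>s\<in>B. init_seg u s \<and> u \<noteq> s)"

lemma least_in: "infinite (X::nat set) \<Longrightarrow> (LEAST n. n \<in> X) \<in> X"
  by (metis LeastI finite.emptyI ex_in_conv)

lemma least_le: "x \<in> (X::nat set) \<Longrightarrow> (LEAST n. n \<in> X) \<le> x"
  by (simp add: Least_le)

lemma shift_sub: "shift X \<subseteq> X" by (auto simp: shift_def)

lemma infinite_shift: "infinite X \<Longrightarrow> infinite (shift X)" by (simp add: shift_def)

lemma shift_insert: "(\<forall>z\<in>Z. m < z) \<Longrightarrow> shift (insert m Z) = Z"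
proof -
  assume a: "\<forall>z\<in>Z. m < z"
  have "(LEAST n. n \<in> insert m Z) = m"
    by (rule Least_equality) (use a in \<open>auto simp: less_imp_le\<close>)
  thus ?thesis using a by (auto simp: shift_def)
qed

locale bar =
  fixes B :: "nat set set"
  assumes bar: "barrier B"
begin

abbreviation "N0 \<equiv> \<Union>B"

lemma finB: "s \<in> B \<Longrightarrow> finite s" using bar by (simp add: barrier_def)

lemma antiB: "s \<in> B \<Longrightarrow> t \<in> B \<Longrightarrow> s \<subseteq> t \<Longrightarrow> s = t"
  using bar unfolding barrier_def by blast

lemma infB: "infinite B" using bar by (simp add: barrier_def)

lemma frontB: "X \<subseteq> N0 \<Longrightarrow> infinite X \<Longrightarrow> \<exists>s\<in>B. init_seg s X"
  using bar unfolding barrier_def by blast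

lemma neB: "s \<in> B \<Longrightarrow> s \<noteq> {}"
proof
  assume "s \<in> B" "s = {}"
  hence "B \<subseteq> {{}}" using antiB by blast
  thus False using infB finite_subset by auto
qed

lemma prefix_unique: "s \<in> B \<Longrightarrow> t \<in> B \<Longrightarrow> init_seg s X \<Longrightarrow> init_seg t X \<Longrightarrow> s = t"
  using init_seg_comp antiB by metis

lemma sig_unique: "s \<in> B \<Longrightarrow> init_seg s X \<Longrightarrow> sigB B X = s"
proof -
  assume a: "s \<in> B" "init_seg s X"
  hence "\<exists>t. t \<in> B \<and> init_seg t X" by blast
  hence "sigB B X \<in> B \<and> init_seg (sigB B X) X" unfolding sigB_def by (rule someI_ex)
  thus ?thesis using a prefix_unique by blast
qed

lemma sig: "X \<subseteq> N0 \<Longrightarrow> infinite X \<Longrightarrow> sigB B X \<in> B \<and> init_seg (sigB B X) X"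
  using frontB sig_unique by metis

lemma node_sub: "nodeB B u \<Longrightarrow> u \<subseteq> N0"
  unfolding nodeB_def using init_seg_subset by blast

lemma node_fin: "nodeB B u \<Longrightarrow> finite u"
  unfolding nodeB_def using init_seg_subset finB finite_subset by blast

definition R where "R = {(u', u). nodeB B u \<and> nodeB B u' \<and> init_seg u u' \<and> u \<noteq> u'}"

lemma wfR: "wf R"
proof (rule ccontr)
  assume "\<not> wf R"
  then obtain f where f: "\<And>i. (f (Suc i), f i) \<in> R" using wf_iff_no_infinite_down_chain by blast
  have nd: "nodeB B (f i)" for i using f[of i] by (auto simp: R_def)
  have fin: "finite (f i)" for i using node_fin nd by blast
  have step: "init_seg (f i) (f (Suc i)) \<and> f i \<noteq> f (Suc i)" for i using f[of i] by (auto simp: R_def)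
  have segle: "init_seg (f i) (f j)" if "i \<le> j" for i j
    using that
  proof (induction j)
    case 0 thus ?case by (simp add: init_seg_refl)
  next
    case (Suc j)
    thus ?case using step[of j] init_seg_trans init_seg_refl by (metis le_Suc_eq)
  qed
  have card: "i \<le> card (f i)" for i
  proof (induction i)
    case 0 thus ?case by simp
  next
    case (Suc i)
    have "f i \<subset> f (Suc i)" using step[of i] init_seg_subset by blast
    hence "card (f i) < card (f (Suc i))" using fin psubset_card_mono by blast
    thus ?case using Suc by simp
  qed
  define X where "X = (\<Union>i. f i)"
  have segX: "init_seg (f i) X" for i
    unfolding init_seg_def
  proof (intro conjI ballI impI)
    show "f i \<subseteq> X" by (auto simp: X_def)
    fix x y assume xy: "x \<in> f i" "y \<in> X" "y < x"
    then obtain j where j: "y \<in> f j" by (auto simp: X_def)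
    show "y \<in> f i"
    proof (cases "j \<le> i")
      case True thus ?thesis using segle[OF True] j init_seg_subset by blast
    next
      case False
      hence "init_seg (f i) (f j)" using segle by simp
      thus ?thesis using init_seg_mem xy j by blast
    qed
  qed
  have "infinite X"
  proof
    assume "finite X"
    hence "card (f (Suc (card X))) \<le> card X" using card_mono init_seg_subset[OF segX] by blast
    thus False using card[of "Suc (card X)"] by simp
  qed
  moreover have "X \<subseteq> N0" using node_sub nd by (auto simp: X_def)
  ultimately obtain s where s: "s \<in> B" "init_seg s X" using frontB by blast
  define k where "k = Suc (card s)"
  have "s \<subseteq> f k \<or> f k \<subseteq> s" using init_seg_comp[OF s(2) segX] .
  moreover have "\<not> f k \<subseteq> s"
  proof
    assume "f k \<subseteq> s"
    hence "card (f k) \<le> card s" using finB[OF s(1)] card_mono by blast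
    thus False using card[of k] by (simp add: k_def)
  qed
  ultimately have sk: "s \<subseteq> f k" by blast
  obtain t where t: "t \<in> B" "init_seg (f k) t" "f k \<noteq> t" using nd[of k] by (auto simp: nodeB_def)
  have "s \<subseteq> t" using sk t init_seg_subset by blast
  hence "s = t" using antiB s(1) t(1) by blast
  thus False using sk t init_seg_subset by blast
qed

end

locale bctx = bar B for B +
  fixes P :: "'a::order set" and u :: "nat set" and N :: "nat set" and h :: "nat set \<Rightarrow> 'a"
  assumes wqo: "wqo_on P" and chain: "is_chain_incl (nonprincipal_ideals P)"
    and nd: "nodeB B u" and infN: "infinite N" and NN0: "N \<subseteq> N0" and abN: "\<forall>n\<in>N. above u n"
    and vals: "\<And>X. X \<subseteq> N \<Longrightarrow> infinite X \<Longrightarrow> h (sigB B (u \<union> X)) \<in> P"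
    and bad: "\<And>X. X \<subseteq> N \<Longrightarrow> infinite X \<Longrightarrow> \<not> h (sigB B (u \<union> X)) \<le> h (sigB B (u \<union> shift X))"
begin

definition pre where "pre X = sigB B (u \<union> X) - u"
definition Fu where "Fu = {s'. u \<union> s' \<in> B \<and> s' \<noteq> {} \<and> (\<forall>y\<in>s'. above u y)}"
definition vv where "vv s' = s' - {Min s'}"
definition D where "D s' = {w. w \<noteq> {} \<and> (\<forall>y\<in>w. above s' y) \<and> u \<union> vv s' \<union> w \<in> B}"
definition \<kappa> where "\<kappa> s' w = h (u \<union> vv s' \<union> w)"

lemma usub: "u \<subseteq> N0" using node_sub nd by blast
lemma ufin: "finite u" using node_fin nd by blast

lemma sigX:
  assumes "X \<subseteq> N" "infinite X"
  shows "sigB B (u \<union> X) \<in> B \<and> init_seg (sigB B (u \<union> X)) (u \<union> X) \<and> u \<subseteq> sigB B (u \<union> X) \<and> u \<noteq> sigB B (u \<union> X)"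
proof -
  have "u \<union> X \<subseteq> N0" using usub assms NN0 by blast
  hence s: "sigB B (u \<union> X) \<in> B" "init_seg (sigB B (u \<union> X)) (u \<union> X)" using sig assms(2) by auto
  have su: "init_seg u (u \<union> X)" using abN assms(1) by (intro init_seg_Un) blast
  obtain t where t: "t \<in> B" "init_seg u t" "u \<noteq> t" using nd by (auto simp: nodeB_def)
  have "\<not> sigB B (u \<union> X) \<subseteq> u"
  proof
    assume a: "sigB B (u \<union> X) \<subseteq> u"
    hence "sigB B (u \<union> X) \<subseteq> t" using t(2) init_seg_subset by blast
    hence "sigB B (u \<union> X) = t" using antiB s(1) t(1) by blast
    thus False using a t init_seg_subset by blast
  qed
  thus ?thesis using init_seg_comp[OF s(2) su] s by blast
qed

lemma Fu_disj: "s' \<in> Fu \<Longrightarrow> s' \<inter> u = {}"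
  unfolding Fu_def above_def by blast

lemma preX:
  assumes X: "X \<subseteq> N" "infinite X"
  shows "pre X \<in> Fu \<and> init_seg (pre X) X \<and> sigB B (u \<union> X) = u \<union> pre X"
proof -
  note s = sigX[OF X]
  have eq: "sigB B (u \<union> X) = u \<union> pre X" using s by (auto simp: pre_def)
  have sub: "pre X \<subseteq> X" using s init_seg_subset by (fastforce simp: pre_def)
  have ne: "pre X \<noteq> {}" using s by (auto simp: pre_def)
  have ab: "\<forall>y\<in>pre X. above u y" using sub X abN by blast
  have seg: "init_seg (pre X) X"
    unfolding init_seg_def
  proof (intro conjI sub ballI impI)
    fix x y assume xy: "x \<in> pre X" "y \<in> X" "y < x"
    have "y \<in> sigB B (u \<union> X)" using init_seg_mem[of _ "u \<union> X" x y] s xy by (auto simp: pre_def)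
    moreover have "y \<notin> u" using abN xy X unfolding above_def by blast
    ultimately show "y \<in> pre X" by (simp add: pre_def)
  qed
  show ?thesis using eq ne ab seg s by (auto simp: Fu_def)
qed

lemma pre_eq:
  assumes X: "X \<subseteq> N" "infinite X" and s': "s' \<in> Fu" "init_seg s' X"
  shows "pre X = s'"
proof -
  have "init_seg (u \<union> s') (u \<union> X)"
    unfolding init_seg_def
  proof (intro conjI ballI impI)
    show "u \<union> s' \<subseteq> u \<union> X" using s'(2) init_seg_subset by blast
    fix x y assume xy: "x \<in> u \<union> s'" "y \<in> u \<union> X" "y < x"
    show "y \<in> u \<union> s'"
    proof (cases "y \<in> u")
      case True thus ?thesis by simp
    next
      case False
      hence yX: "y \<in> X" using xy by simp
      hence ay: "above u y" using abN X by blast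
      show ?thesis
      proof (cases "x \<in> u")
        case True thus ?thesis using ay xy(3) unfolding above_def by auto
      next
        case False
        hence "x \<in> s'" using xy by simp
        thus ?thesis using init_seg_mem[OF s'(2) _ yX xy(3)] by simp
      qed
    qed
  qed
  moreover have "u \<union> s' \<in> B" using s' by (simp add: Fu_def)
  ultimately have "sigB B (u \<union> X) = u \<union> s'" using sig_unique by blast
  thus ?thesis using Fu_disj[OF s'(1)] by (auto simp: pre_def)
qed

lemma Fu_fin: "s' \<in> Fu \<Longrightarrow> finite s'"
  unfolding Fu_def using finB finite_Un by blast

lemma Fu_N0: "s' \<in> Fu \<Longrightarrow> s' \<subseteq> N0"
  unfolding Fu_def by blast

lemma Min_in_Fu: "s' \<in> Fu \<Longrightarrow> Min s' \<in> s'"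
  using Fu_fin by (auto simp: Fu_def)

lemma above_s'_u: "s' \<in> Fu \<Longrightarrow> above s' y \<Longrightarrow> above u y"
proof -
  assume a: "s' \<in> Fu" "above s' y"
  have "Min s' \<in> s'" using Min_in_Fu a(1) by blast
  hence "above u (Min s')" "Min s' < y" using a unfolding Fu_def above_def by auto
  thus ?thesis unfolding above_def by auto
qed

lemma disjD: "s' \<in> Fu \<Longrightarrow> above s' y \<Longrightarrow> y \<notin> u \<union> vv s'"
proof -
  assume a: "s' \<in> Fu" "above s' y"
  hence "above u y" using above_s'_u by blast
  thus ?thesis using a(2) unfolding above_def vv_def by auto
qed

lemma thinD:
  assumes "s' \<in> Fu" "w \<in> D s'" "w' \<in> D s'" "init_seg w w'"
  shows "w = w'"
proof -
  have "u \<union> vv s' \<union> w \<subseteq> u \<union> vv s' \<union> w'" using assms(4) init_seg_subset by blast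
  hence eq: "u \<union> vv s' \<union> w = u \<union> vv s' \<union> w'" using antiB assms(2,3) by (simp add: D_def)
  have "w \<inter> (u \<union> vv s') = {}" "w' \<inter> (u \<union> vv s') = {}"
    using disjD[OF assms(1)] assms(2,3) by (auto simp: D_def)
  thus ?thesis using eq by blast
qed

lemma D_prefix_unique:
  assumes "s' \<in> Fu" "w1 \<in> D s'" "w2 \<in> D s'" "init_seg w1 Y" "init_seg w2 Y"
  shows "w1 = w2"
proof -
  have "w1 \<subseteq> w2 \<or> w2 \<subseteq> w1" using init_seg_comp assms(4,5) by blast
  thus ?thesis
  proof
    assume "w1 \<subseteq> w2"
    hence "init_seg w1 w2" using init_seg_sub[OF assms(4) _ init_seg_subset[OF assms(5)]] by blast
    thus ?thesis using thinD assms by blast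
  next
    assume "w2 \<subseteq> w1"
    hence "init_seg w2 w1" using init_seg_sub[OF assms(5) _ init_seg_subset[OF assms(4)]] by blast
    thus ?thesis using thinD assms by metis
  qed
qed

lemma D_fin: "w \<in> D s' \<Longrightarrow> finite w"
  unfolding D_def using finB finite_Un by blast

lemma frontD:
  assumes s': "s' \<in> Fu" and Y: "Y \<subseteq> N0" "infinite Y" "\<forall>y\<in>Y. above s' y"
  shows "\<exists>w\<in>D s'. init_seg w Y \<and> init_seg (u \<union> vv s' \<union> w) (u \<union> vv s' \<union> Y)"
proof -
  define Z where "Z = u \<union> vv s' \<union> Y"
  have vsub: "vv s' \<subseteq> s'" by (auto simp: vv_def)
  have ZN0: "Z \<subseteq> N0" unfolding Z_def using usub Fu_N0[OF s'] vsub Y(1) by blast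
  have infZ: "infinite Z" using Y(2) by (simp add: Z_def)
  define t where "t = sigB B Z"
  have t: "t \<in> B" "init_seg t Z" using sig[OF ZN0 infZ] by (auto simp: t_def)
  have uvseg: "init_seg (u \<union> vv s') Z"
    unfolding Z_def
  proof (rule init_seg_Un)
    fix y assume "y \<in> Y"
    hence "above s' y" "above u y" using Y(3) above_s'_u[OF s'] by auto
    thus "above (u \<union> vv s') y" using vsub unfolding above_def by blast
  qed
  have ms: "Min s' \<in> s'" using Min_in_Fu[OF s'] .
  have "\<not> t \<subseteq> u \<union> vv s'"
  proof
    assume a: "t \<subseteq> u \<union> vv s'"
    hence "t \<subseteq> u \<union> s'" using vsub by blast
    hence "t = u \<union> s'" using antiB t(1) s' by (simp add: Fu_def)
    hence "Min s' \<in> u \<union> vv s'" using a ms by blast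
    moreover have "Min s' \<notin> u" using s' ms Fu_disj by blast
    ultimately show False by (simp add: vv_def)
  qed
  hence uvt: "u \<union> vv s' \<subseteq> t" using init_seg_comp[OF t(2) uvseg] by blast
  define w where "w = t - (u \<union> vv s')"
  have teq: "t = u \<union> vv s' \<union> w" using uvt by (auto simp: w_def)
  have wY: "w \<subseteq> Y" using init_seg_subset[OF t(2)] by (auto simp: w_def Z_def)
  have wne: "w \<noteq> {}" using \<open>\<not> t \<subseteq> u \<union> vv s'\<close> by (auto simp: w_def)
  have wD: "w \<in> D s'" using wY Y(3) wne t(1) teq by (auto simp: D_def)
  have "init_seg w Y"
    unfolding init_seg_def
  proof (intro conjI wY ballI impI)
    fix x y assume xy: "x \<in> w" "y \<in> Y" "y < x"
    have "x \<in> t" using xy by (simp add: w_def)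
    hence "y \<in> t" using init_seg_mem[OF t(2)] xy by (auto simp: Z_def)
    moreover have "y \<notin> u \<union> vv s'" using disjD[OF s'] Y(3) xy(2) by blast
    ultimately show "y \<in> w" by (simp add: w_def)
  qed
  thus ?thesis using wD t(2) teq by (auto simp: Z_def)
qed

end

context bctx begin

lemma link:
  assumes X: "X \<subseteq> N" "infinite X"
  shows "\<exists>w\<in>D (pre X). init_seg w (tailS (pre X) X) \<and> sigB B (u \<union> shift X) = u \<union> vv (pre X) \<union> w"
proof -
  define s' where "s' = pre X"
  have p: "s' \<in> Fu" "init_seg s' X" "sigB B (u \<union> X) = u \<union> s'" using preX[OF X] by (auto simp: s'_def)
  define m where "m = (LEAST n. n \<in> X)"
  have mX: "m \<in> X" using least_in X(2) by (simp add: m_def)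
  have mle: "m \<le> x" if "x \<in> X" for x using least_le that by (simp add: m_def)
  have fs: "finite s'" using Fu_fin p(1) by blast
  have sne: "s' \<noteq> {}" using p(1) by (simp add: Fu_def)
  have ssX: "s' \<subseteq> X" using p(2) init_seg_subset by blast
  have ms: "m \<in> s'"
  proof -
    obtain x where x: "x \<in> s'" using sne by blast
    show ?thesis
    proof (cases "m = x")
      case True thus ?thesis using x by simp
    next
      case False
      hence "m < x" using mle x ssX by force
      thus ?thesis using init_seg_mem[OF p(2) x mX] by simp
    qed
  qed
  have Mins: "Min s' = m" using ms fs ssX mle by (intro Min_eqI) auto
  define T where "T = tailS s' X"
  have Xeq: "X = s' \<union> T"
  proof
    show "X \<subseteq> s' \<union> T"
    proof
      fix y assume y: "y \<in> X"
      show "y \<in> s' \<union> T"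
      proof (cases "y \<in> s'")
        case True thus ?thesis by simp
      next
        case False
        have "above s' y" unfolding above_def
        proof
          fix x assume x: "x \<in> s'"
          have "\<not> y < x" using init_seg_mem[OF p(2) x y] False by blast
          moreover have "y \<noteq> x" using False x by blast
          ultimately show "x < y" by simp
        qed
        thus ?thesis using y by (simp add: T_def tailS_def)
      qed
    qed
  next
    show "s' \<union> T \<subseteq> X" using ssX by (auto simp: T_def tailS_def)
  qed
  have mT: "m \<notin> T" using ms by (auto simp: T_def tailS_def above_def)
  have "shift X = X - {m}" by (simp add: shift_def m_def)
  also have "\<dots> = vv s' \<union> T" using Xeq mT Mins by (auto simp: vv_def)
  finally have shX: "shift X = vv s' \<union> T" .
  have TN0: "T \<subseteq> N0" using X NN0 tailS_sub by (auto simp: T_def tailS_def)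
  have infT: "infinite T" using infinite_tailS[OF X(2) fs] by (simp add: T_def)
  have abT: "\<forall>y\<in>T. above s' y" by (simp add: T_def tailS_def)
  obtain w where w: "w \<in> D s'" "init_seg w T" "init_seg (u \<union> vv s' \<union> w) (u \<union> vv s' \<union> T)"
    using frontD[OF p(1) TN0 infT abT] by blast
  have "u \<union> vv s' \<union> w \<in> B" using w(1) by (simp add: D_def)
  hence "sigB B (u \<union> vv s' \<union> T) = u \<union> vv s' \<union> w" using sig_unique w(3) by blast
  moreover have "u \<union> shift X = u \<union> vv s' \<union> T" using shX by auto
  ultimately show ?thesis using w(1,2) by (auto simp: s'_def T_def)
qed

lemma rlink:
  assumes s': "s' \<in> Fu" "s' \<subseteq> N" and w: "w \<in> D s'" "w \<subseteq> N"
  shows "\<not> h (u \<union> s') \<le> \<kappa> s' w \<and> h (u \<union> s') \<in> P \<and> \<kappa> s' w \<in> P"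
proof -
  have fs: "finite s'" using Fu_fin s' by blast
  have fw: "finite w" using D_fin w by blast
  define X where "X = s' \<union> w \<union> tailS (s' \<union> w) N"
  have XN: "X \<subseteq> N" using s' w tailS_sub by (auto simp: X_def)
  have infX: "infinite X" using infinite_tailS[OF infN, of "s' \<union> w"] fs fw by (simp add: X_def)
  have abw: "\<forall>y\<in>w. above s' y" using w(1) by (simp add: D_def)
  have segs: "init_seg s' X"
    unfolding X_def Un_assoc
  proof (rule init_seg_Un)
    fix y assume "y \<in> w \<union> tailS (s' \<union> w) N"
    thus "above s' y" using abw by (auto simp: tailS_def above_def)
  qed
  have pX: "pre X = s'" using pre_eq[OF XN infX s'(1) segs] .
  obtain w1 where w1: "w1 \<in> D s'" "init_seg w1 (tailS s' X)" "sigB B (u \<union> shift X) = u \<union> vv s' \<union> w1"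
    using link[OF XN infX] pX by auto
  have tX: "tailS s' X = w \<union> tailS (s' \<union> w) N"
  proof -
    have "\<forall>y\<in>s'. \<not> above s' y" by (auto simp: above_def)
    thus ?thesis using abw by (auto simp: X_def tailS_def above_def)
  qed
  have "init_seg w (tailS s' X)"
    unfolding tX by (rule init_seg_Un) (auto simp: tailS_def above_def)
  hence "w1 = w" using D_prefix_unique[OF s'(1) w1(1) w(1) w1(2)] by blast
  hence sh: "sigB B (u \<union> shift X) = u \<union> vv s' \<union> w" using w1(3) by simp
  have sX: "sigB B (u \<union> X) = u \<union> s'" using preX[OF XN infX] pX by simp
  have "shift X \<subseteq> N" "infinite (shift X)" using XN shift_sub infinite_shift infX by blast+
  thus ?thesis using bad[OF XN infX] vals[OF XN infX] vals[of "shift X"] sX sh by (simp add: \<kappa>_def)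
qed

definition Inc where "Inc s' M \<longleftrightarrow> (\<forall>w\<in>D s'. \<forall>w'\<in>D s'. w \<subseteq> M \<longrightarrow> w' \<subseteq> M \<longrightarrow> (\<forall>y\<in>w'. above w y) \<longrightarrow> \<kappa> s' w \<le> \<kappa> s' w')"
definition Const where "Const s' M \<longleftrightarrow> (\<forall>w\<in>D s'. \<forall>w'\<in>D s'. w \<subseteq> M \<longrightarrow> w' \<subseteq> M \<longrightarrow> \<kappa> s' w = \<kappa> s' w')"
definition NoMax where "NoMax s' M \<longleftrightarrow> \<not> (\<exists>w\<in>D s'. w \<subseteq> M \<and> (\<forall>w'\<in>D s'. w' \<subseteq> M \<longrightarrow> \<kappa> s' w' \<le> \<kappa> s' w))"
definition Qf where "Qf s' M \<longleftrightarrow> (s' \<in> Fu \<and> s' \<subseteq> N \<longrightarrow> Inc s' M \<and> (Const s' M \<or> NoMax s' M))"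

lemma IncD: "Inc s' M \<Longrightarrow> w \<in> D s' \<Longrightarrow> w' \<in> D s' \<Longrightarrow> w \<subseteq> M \<Longrightarrow> w' \<subseteq> M \<Longrightarrow> (\<forall>y\<in>w'. above w y) \<Longrightarrow> \<kappa> s' w \<le> \<kappa> s' w'"
  by (simp add: Inc_def)

lemma Inc_mono: assumes "Inc s' M" "M' \<subseteq> M" shows "Inc s' M'"
  unfolding Inc_def
proof (intro ballI impI)
  fix w w' assume a: "w \<in> D s'" "w' \<in> D s'" "w \<subseteq> M'" "w' \<subseteq> M'" "\<forall>y\<in>w'. above w y"
  have "w \<subseteq> M" "w' \<subseteq> M" using a(3,4) assms(2) by auto
  thus "\<kappa> s' w \<le> \<kappa> s' w'" using IncD[OF assms(1) a(1,2)] a(5) by blast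
qed

lemma ConstD: "Const s' M \<Longrightarrow> w \<in> D s' \<Longrightarrow> w' \<in> D s' \<Longrightarrow> w \<subseteq> M \<Longrightarrow> w' \<subseteq> M \<Longrightarrow> \<kappa> s' w = \<kappa> s' w'"
  unfolding Const_def by blast

lemma Const_mono: assumes "Const s' M" "M' \<subseteq> M" shows "Const s' M'"
  unfolding Const_def
proof (intro ballI impI)
  fix w w' assume a: "w \<in> D s'" "w' \<in> D s'" "w \<subseteq> M'" "w' \<subseteq> M'"
  have "w \<subseteq> M" "w' \<subseteq> M" using a(3,4) assms(2) by auto
  thus "\<kappa> s' w = \<kappa> s' w'" using ConstD[OF assms(1) a(1,2)] by blast
qed

lemma Qf_hered:
  assumes M: "M \<subseteq> N" and Q: "Qf s' M" and M': "M' \<subseteq> M" "infinite M'"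
  shows "Qf s' M'"
  unfolding Qf_def
proof (intro impI)
  assume s': "s' \<in> Fu \<and> s' \<subseteq> N"
  have inc: "Inc s' M" using Q s' by (simp add: Qf_def)
  have inc': "Inc s' M'" using Inc_mono inc M'(1) by blast
  have "Const s' M \<or> NoMax s' M" using Q s' by (simp add: Qf_def)
  thus "Inc s' M' \<and> (Const s' M' \<or> NoMax s' M')"
  proof
    assume "Const s' M" thus ?thesis using inc' M' Const_mono by blast
  next
    assume nm: "NoMax s' M"
    have "NoMax s' M'" unfolding NoMax_def
    proof
      assume "\<exists>w\<in>D s'. w \<subseteq> M' \<and> (\<forall>w'\<in>D s'. w' \<subseteq> M' \<longrightarrow> \<kappa> s' w' \<le> \<kappa> s' w)"
      then obtain w0 where w0: "w0 \<in> D s'" "w0 \<subseteq> M'" "\<forall>w'\<in>D s'. w' \<subseteq> M' \<longrightarrow> \<kappa> s' w' \<le> \<kappa> s' w0" by blast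
      have "\<forall>w\<in>D s'. w \<subseteq> M \<longrightarrow> \<kappa> s' w \<le> \<kappa> s' w0"
      proof (intro ballI impI)
        fix w assume w: "w \<in> D s'" "w \<subseteq> M"
        define Y where "Y = tailS (s' \<union> w) M'"
        have fsw: "finite (s' \<union> w)" using Fu_fin D_fin s' w by blast
        have infY: "infinite Y" using infinite_tailS[OF M'(2) fsw] by (simp add: Y_def)
        have YN0: "Y \<subseteq> N0" using M M' NN0 tailS_sub by (fastforce simp: Y_def)
        have abY: "\<forall>y\<in>Y. above s' y" by (auto simp: Y_def tailS_def above_def)
        obtain w'' where w'': "w'' \<in> D s'" "init_seg w'' Y" using frontD[OF _ YN0 infY abY] s' by blast
        have w''Y: "w'' \<subseteq> Y" using w''(2) init_seg_subset by blast
        have "\<forall>y\<in>w''. above w y" using w''Y by (auto simp: Y_def tailS_def above_def)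
        moreover have "w'' \<subseteq> M" using w''Y M' by (auto simp: Y_def tailS_def)
        ultimately have "\<kappa> s' w \<le> \<kappa> s' w''" using IncD[OF inc w(1) w''(1) w(2)] by blast
        also have "\<kappa> s' w'' \<le> \<kappa> s' w0" using w0(3) w''(1) w''Y by (auto simp: Y_def tailS_def)
        finally show "\<kappa> s' w \<le> \<kappa> s' w0" .
      qed
      thus False using nm w0 M' unfolding NoMax_def by blast
    qed
    thus ?thesis using inc' by blast
  qed
qed

lemma Qf_ex:
  assumes fs: "finite s'" and M: "M \<subseteq> N" "infinite M"
  shows "\<exists>M'\<subseteq>M. infinite M' \<and> Qf s' M'"
proof (cases "s' \<in> Fu \<and> s' \<subseteq> N")
  case False thus ?thesis using M by (auto simp: Qf_def)
next
  case True
  define M1 where "M1 = tailS s' M"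
  have M1: "M1 \<subseteq> M" "infinite M1" using infinite_tailS[OF M(2) fs] tailS_sub by (auto simp: M1_def)
  have "\<exists>M'\<subseteq>M1. infinite M' \<and> (\<forall>w\<in>D s'. \<forall>w'\<in>D s'. w \<subseteq> M' \<longrightarrow> w' \<subseteq> M' \<longrightarrow> (\<forall>y\<in>w'. above w y) \<longrightarrow> \<kappa> s' w \<le> \<kappa> s' w')"
  proof (rule inc_thin[OF wqo M1(2)])
    show "w = w'" if "w \<in> D s'" "w' \<in> D s'" "init_seg w w'" for w w' using thinD True that by blast
    show "\<forall>w\<in>D s'. finite w" using D_fin by blast
    show "\<exists>w\<in>D s'. init_seg w Y" if "Y \<subseteq> M1" "infinite Y" for Y
    proof -
      have "Y \<subseteq> N0" using that M1 M NN0 by blast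
      moreover have "\<forall>y\<in>Y. above s' y" using that by (auto simp: M1_def tailS_def)
      ultimately show ?thesis using frontD True that(2) by blast
    qed
    show "\<kappa> s' w \<in> P" if "w \<in> D s'" "w \<subseteq> M1" for w
      using rlink[of s' w] True that M1 M by blast
  qed
  then obtain M2 where M2: "M2 \<subseteq> M1" "infinite M2" "Inc s' M2" unfolding Inc_def by blast
  show ?thesis
  proof (cases "NoMax s' M2")
    case True thus ?thesis using M2 M1 by (auto simp: Qf_def)
  next
    case False
    then obtain w0 where w0: "w0 \<in> D s'" "w0 \<subseteq> M2" "\<forall>w'\<in>D s'. w' \<subseteq> M2 \<longrightarrow> \<kappa> s' w' \<le> \<kappa> s' w0"
      unfolding NoMax_def by blast
    define M3 where "M3 = tailS w0 M2"
    have M3: "M3 \<subseteq> M2" "infinite M3" using infinite_tailS[OF M2(2) D_fin[OF w0(1)]] tailS_sub by (auto simp: M3_def)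
    have eq0: "\<kappa> s' w = \<kappa> s' w0" if "w \<in> D s'" "w \<subseteq> M3" for w
    proof -
      have "\<forall>y\<in>w. above w0 y" using that by (auto simp: M3_def tailS_def)
      moreover have "w \<subseteq> M2" using that M3 by blast
      ultimately have "\<kappa> s' w0 \<le> \<kappa> s' w" using IncD[OF M2(3) w0(1) that(1) w0(2)] by blast
      moreover have "\<kappa> s' w \<le> \<kappa> s' w0" using w0(3) that M3 by blast
      ultimately show ?thesis by simp
    qed
    have "Const s' M3" unfolding Const_def using eq0 by simp
    moreover have "Inc s' M3" using M2(3) M3 Inc_mono by blast
    ultimately show ?thesis using M3 M2 M1 by (auto simp: Qf_def)
  qed
qed

lemma exN1: "\<exists>N1\<subseteq>N. infinite N1 \<and> (\<forall>s'. finite s' \<longrightarrow> s' \<subseteq> N1 \<longrightarrow> Qf s' (tailS s' N1))"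
  by (rule fusion[OF infN, where Q=Qf]) (use Qf_hered Qf_ex in blast)+

end

context bctx begin

lemma least_pre:
  assumes X: "X \<subseteq> N" "infinite X"
  shows "(LEAST n. n \<in> X) \<in> pre X"
proof -
  have p: "pre X \<in> Fu" "init_seg (pre X) X" using preX[OF X] by auto
  define m where "m = (LEAST n. n \<in> X)"
  have mX: "m \<in> X" using least_in X(2) by (simp add: m_def)
  have mle: "m \<le> x" if "x \<in> X" for x using least_le that by (simp add: m_def)
  obtain x where x: "x \<in> pre X" using p(1) by (auto simp: Fu_def)
  have xX: "x \<in> X" using x p(2) init_seg_subset by blast
  show ?thesis
  proof (cases "m = x")
    case True thus ?thesis using x by (simp add: m_def)
  next
    case False
    hence "m < x" using mle xX by force
    thus ?thesis using init_seg_mem[OF p(2) x mX] by (simp add: m_def)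
  qed
qed

end

locale bctx1 = bctx +
  fixes N1 :: "nat set"
  assumes N1N: "N1 \<subseteq> N" and infN1: "infinite N1"
    and QN1': "\<And>s'. finite s' \<Longrightarrow> s' \<subseteq> N1 \<Longrightarrow> Qf s' (tailS s' N1)"
begin

definition G where "G s' = {x \<in> P. \<exists>w\<in>D s'. w \<subseteq> tailS s' N1 \<and> x \<le> \<kappa> s' w}"

lemma QN1:
  assumes "s' \<in> Fu" "s' \<subseteq> N1"
  shows "Inc s' (tailS s' N1) \<and> (Const s' (tailS s' N1) \<or> NoMax s' (tailS s' N1))"
  using QN1'[of s'] assms Fu_fin N1N unfolding Qf_def by blast

lemma exw:
  assumes s': "s' \<in> Fu" "s' \<subseteq> N1" and A: "finite A"
  shows "\<exists>w\<in>D s'. w \<subseteq> tailS s' N1 \<and> (\<forall>y\<in>w. above A y)"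
proof -
  define Y where "Y = tailS (s' \<union> A) N1"
  have fsA: "finite (s' \<union> A)" using Fu_fin s' A by blast
  have infY: "infinite Y" using infinite_tailS[OF infN1 fsA] by (simp add: Y_def)
  have YN0: "Y \<subseteq> N0" using N1N NN0 tailS_sub by (fastforce simp: Y_def)
  have abY: "\<forall>y\<in>Y. above s' y" by (auto simp: Y_def tailS_def above_def)
  obtain w where w: "w \<in> D s'" "init_seg w Y" using frontD[OF s'(1) YN0 infY abY] by blast
  have "w \<subseteq> Y" using w(2) init_seg_subset by blast
  thus ?thesis using w(1) by (auto simp: Y_def tailS_def above_def)
qed

lemma kappaP:
  assumes "s' \<in> Fu" "s' \<subseteq> N1" "w \<in> D s'" "w \<subseteq> tailS s' N1"
  shows "\<kappa> s' w \<in> P"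
proof -
  have "s' \<subseteq> N" "w \<subseteq> N" using assms N1N tailS_sub by blast+
  thus ?thesis using rlink assms by blast
qed

lemma G_ideal:
  assumes s': "s' \<in> Fu" "s' \<subseteq> N1"
  shows "ideal_of P (G s')"
  unfolding ideal_of_def
proof (intro conjI ballI impI)
  show "G s' \<subseteq> P" by (auto simp: G_def)
  obtain w where w: "w \<in> D s'" "w \<subseteq> tailS s' N1" using exw[OF s', of "{}"] by auto
  have "\<kappa> s' w \<in> G s'" using kappaP[OF s' w] w by (auto simp: G_def)
  thus "G s' \<noteq> {}" by blast
  fix x y assume "x \<in> G s'" "y \<in> P" "y \<le> x"
  thus "y \<in> G s'" unfolding G_def using order_trans by blast
next
  fix x y assume xy: "x \<in> G s'" "y \<in> G s'"
  then obtain w1 w2 where w1: "w1 \<in> D s'" "w1 \<subseteq> tailS s' N1" "x \<le> \<kappa> s' w1"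
     and w2: "w2 \<in> D s'" "w2 \<subseteq> tailS s' N1" "y \<le> \<kappa> s' w2" unfolding G_def by blast
  have fw: "finite (w1 \<union> w2)" using D_fin w1 w2 by blast
  obtain w3 where w3: "w3 \<in> D s'" "w3 \<subseteq> tailS s' N1" "\<forall>y\<in>w3. above (w1 \<union> w2) y"
    using exw[OF s' fw] by blast
  have inc: "Inc s' (tailS s' N1)" using QN1[OF s'] by blast
  have a1: "\<forall>y\<in>w3. above w1 y" and a2: "\<forall>y\<in>w3. above w2 y" using w3(3) by (auto simp: above_def)
  have "\<kappa> s' w1 \<le> \<kappa> s' w3" using IncD[OF inc w1(1) w3(1) w1(2) w3(2) a1] .
  moreover have "\<kappa> s' w2 \<le> \<kappa> s' w3" using IncD[OF inc w2(1) w3(1) w2(2) w3(2) a2] .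
  moreover have "\<kappa> s' w3 \<in> G s'" using kappaP[OF s' w3(1,2)] w3 by (auto simp: G_def)
  ultimately show "\<exists>z\<in>G s'. x \<le> z \<and> y \<le> z" using w1(3) w2(3) order_trans by blast
qed

lemma G_notin:
  assumes s': "s' \<in> Fu" "s' \<subseteq> N1"
  shows "h (u \<union> s') \<notin> G s'"
proof
  assume "h (u \<union> s') \<in> G s'"
  then obtain w where w: "w \<in> D s'" "w \<subseteq> tailS s' N1" "h (u \<union> s') \<le> \<kappa> s' w" unfolding G_def by blast
  have "s' \<subseteq> N" "w \<subseteq> N" using s' w N1N tailS_sub by blast+
  thus False using rlink[OF s'(1) _ w(1)] w(3) by blast
qed

lemma G_in:
  assumes X: "X \<subseteq> N1" "infinite X"
  shows "h (sigB B (u \<union> shift X)) \<in> G (pre X)"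
proof -
  have XN: "X \<subseteq> N" using X N1N by blast
  obtain w where w: "w \<in> D (pre X)" "init_seg w (tailS (pre X) X)" "sigB B (u \<union> shift X) = u \<union> vv (pre X) \<union> w"
    using link[OF XN X(2)] by blast
  have pX: "pre X \<in> Fu" "pre X \<subseteq> N1" using preX[OF XN X(2)] init_seg_subset X(1) by blast+
  have "w \<subseteq> tailS (pre X) N1" using init_seg_subset[OF w(2)] X(1) by (auto simp: tailS_def)
  moreover hence "\<kappa> (pre X) w \<in> P" using kappaP[OF pX w(1)] by blast
  ultimately show ?thesis using w by (auto simp: G_def \<kappa>_def)
qed

lemma G_princ_const:
  assumes s': "s' \<in> Fu" "s' \<subseteq> N1" and pr: "principal_ideal (G s')"
  shows "Const s' (tailS s' N1)"
proof -
  obtain m where m: "m \<in> G s'" "\<forall>x\<in>G s'. x \<le> m" using pr by (auto simp: principal_ideal_def)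
  then obtain w0 where w0: "w0 \<in> D s'" "w0 \<subseteq> tailS s' N1" "m \<le> \<kappa> s' w0" unfolding G_def by blast
  have "\<kappa> s' w' \<le> \<kappa> s' w0" if "w' \<in> D s'" "w' \<subseteq> tailS s' N1" for w'
  proof -
    have "\<kappa> s' w' \<in> G s'" using kappaP[OF s' that] that by (auto simp: G_def)
    hence "\<kappa> s' w' \<le> m" using m by blast
    thus ?thesis using w0(3) by simp
  qed
  hence "\<not> NoMax s' (tailS s' N1)" unfolding NoMax_def using w0 by blast
  thus ?thesis using QN1[OF s'] by blast
qed

end

context bctx1 begin

lemma caseA:
  assumes N2: "N2 \<subseteq> N1" "infinite N2"
    and nonpr: "\<And>X. X \<subseteq> N2 \<Longrightarrow> infinite X \<Longrightarrow> \<not> principal_ideal (G (pre X))"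
  shows False
proof -
  define Xk where "Xk = (\<lambda>k. (shift ^^ k) N2)"
  have Xk: "Xk k \<subseteq> N2 \<and> infinite (Xk k)" for k
  proof (induction k)
    case 0 thus ?case using N2 by (simp add: Xk_def)
  next
    case (Suc k)
    have "Xk (Suc k) = shift (Xk k)" by (simp add: Xk_def)
    thus ?case using Suc shift_sub infinite_shift by (metis order_trans)
  qed
  have XkN1: "Xk k \<subseteq> N1" and XkN: "Xk k \<subseteq> N" and infXk: "infinite (Xk k)" for k
    using Xk[of k] N2 N1N by blast+
  have XS: "Xk (Suc k) = shift (Xk k)" for k by (simp add: Xk_def)
  have pk: "pre (Xk k) \<in> Fu" "pre (Xk k) \<subseteq> N1" for k
    using preX[OF XkN infXk] init_seg_subset XkN1 by blast+
  define Gk where "Gk = (\<lambda>k. G (pre (Xk k)))"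
  have Gid: "ideal_of P (Gk k)" for k using G_ideal[OF pk] by (simp add: Gk_def)
  have Gnp: "Gk k \<in> nonprincipal_ideals P" for k
    using Gid nonpr[OF _ infXk] Xk by (auto simp: nonprincipal_ideals_def Gk_def)
  define e where "e = (\<lambda>k. h (sigB B (u \<union> shift (Xk k))))"
  have ein: "e k \<in> Gk k" for k using G_in[OF XkN1 infXk] by (simp add: e_def Gk_def)
  have enot: "e k \<notin> Gk (Suc k)" for k
  proof -
    have "sigB B (u \<union> Xk (Suc k)) = u \<union> pre (Xk (Suc k))" using preX[OF XkN infXk] by blast
    hence "e k = h (u \<union> pre (Xk (Suc k)))" by (simp add: e_def XS)
    thus ?thesis using G_notin[OF pk] by (simp add: Gk_def)
  qed
  have decS: "Gk (Suc k) \<subseteq> Gk k" for k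
  proof -
    have "Gk (Suc k) \<subseteq> Gk k \<or> Gk k \<subseteq> Gk (Suc k)" using chain Gnp unfolding is_chain_incl_def by blast
    thus ?thesis using ein enot by blast
  qed
  have dec: "Gk j \<subseteq> Gk i" if "i \<le> j" for i j
    using that
  proof (induction j)
    case 0 thus ?case by simp
  next
    case (Suc j)
    thus ?case using decS by (metis le_Suc_eq order_refl order_trans)
  qed
  have eP: "e k \<in> P" for k using ein Gid unfolding ideal_of_def by blast
  obtain i j where ij: "i < j" "e i \<le> e j" using wqo_good_seq[OF wqo eP] by blast
  have "e j \<in> Gk (Suc i)" using ein[of j] dec[of "Suc i" j] ij(1) by auto
  hence "e i \<in> Gk (Suc i)" using Gid[of "Suc i"] eP ij(2) unfolding ideal_of_def by blast
  thus False using enot by blast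
qed

end

context bctx1 begin

lemma caseB:
  assumes N2: "N2 \<subseteq> N1" "infinite N2"
    and pr: "\<And>X. X \<subseteq> N2 \<Longrightarrow> infinite X \<Longrightarrow> principal_ideal (G (pre X))"
  shows "\<exists>u' N' h'. (u', u) \<in> R \<and> infinite N' \<and> N' \<subseteq> N0 \<and> (\<forall>n\<in>N'. above u' n) \<and>
     (\<forall>X. X \<subseteq> N' \<longrightarrow> infinite X \<longrightarrow> h' (sigB B (u' \<union> X)) \<in> P \<and> \<not> h' (sigB B (u' \<union> X)) \<le> h' (sigB B (u' \<union> shift X)))"
proof -
  have N2N: "N2 \<subseteq> N" using N2 N1N by blast
  define p where "p = (\<lambda>s'. h (sigB B (u \<union> shift (s' \<union> tailS s' N2))))"
  have keq: "h (sigB B (u \<union> shift X)) = p (pre X)" if X: "X \<subseteq> N2" "infinite X" for X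
  proof -
    have XN: "X \<subseteq> N" using X N2N by blast
    define s' where "s' = pre X"
    have ps: "s' \<in> Fu" "init_seg s' X" using preX[OF XN X(2)] by (auto simp: s'_def)
    have sN1: "s' \<subseteq> N1" using init_seg_subset[OF ps(2)] X N2 by blast
    have cst: "Const s' (tailS s' N1)" using G_princ_const[OF ps(1) sN1] pr[OF X] by (simp add: s'_def)
    obtain w where w: "w \<in> D s'" "init_seg w (tailS s' X)" "sigB B (u \<union> shift X) = u \<union> vv s' \<union> w"
      using link[OF XN X(2)] by (auto simp: s'_def)
    define X0 where "X0 = s' \<union> tailS s' N2"
    have X0: "X0 \<subseteq> N2" "infinite X0"
      using init_seg_subset[OF ps(2)] X(1) tailS_sub infinite_tailS[OF N2(2) Fu_fin[OF ps(1)]]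
      by (auto simp: X0_def)
    have X0N: "X0 \<subseteq> N" using X0 N2N by blast
    have pX0: "pre X0 = s'" using pre_eq[OF X0N X0(2) ps(1)] init_seg_tailS by (simp add: X0_def)
    obtain w0 where w0: "w0 \<in> D s'" "init_seg w0 (tailS s' X0)" "sigB B (u \<union> shift X0) = u \<union> vv s' \<union> w0"
      using link[OF X0N X0(2)] pX0 by auto
    have "w \<subseteq> tailS s' N1" using init_seg_subset[OF w(2)] X N2 by (auto simp: tailS_def)
    moreover have "w0 \<subseteq> tailS s' N1" using init_seg_subset[OF w0(2)] X0 N2 by (auto simp: tailS_def)
    ultimately have "\<kappa> s' w = \<kappa> s' w0" using ConstD[OF cst w(1) w0(1)] by blast
    thus ?thesis using w(3) w0(3) by (simp add: \<kappa>_def p_def X0_def s'_def)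
  qed
  define m0 where "m0 = (LEAST n. n \<in> N2)"
  have m0: "m0 \<in> N2" using least_in N2(2) by (simp add: m0_def)
  have m0le: "m0 \<le> n" if "n \<in> N2" for n using least_le that by (simp add: m0_def)
  define N3 where "N3 = N2 - {m0}"
  define u' where "u' = insert m0 u"
  define h' where "h' = (\<lambda>t. p (t - u))"
  have N3: "N3 \<subseteq> N2" "infinite N3" using N2(2) by (auto simp: N3_def)
  have N3N: "N3 \<subseteq> N" using N3 N2N by blast
  have gt: "m0 < z" if "z \<in> N3" for z using that m0le by (force simp: N3_def)
  have abm0: "above u m0" using abN m0 N2N by blast
  have m0u: "m0 \<notin> u" using abm0 by (auto simp: above_def)
  have segu': "init_seg u' (u' \<union> Z')" if "Z' \<subseteq> N3" for Z'
    unfolding u'_def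
  proof (rule init_seg_Un)
    fix y assume "y \<in> Z'"
    hence "y \<in> N3" using that by blast
    hence "m0 < y" "above u y" using gt abN N3N by blast+
    thus "above (insert m0 u) y" by (auto simp: above_def)
  qed
  have EQ: "h (sigB B (u \<union> Z')) = h' (sigB B (u' \<union> Z')) \<and> u' \<subseteq> sigB B (u' \<union> Z') \<and>
            sigB B (u' \<union> Z') \<in> B \<and> init_seg u' (sigB B (u' \<union> Z'))"
    if Z': "Z' \<subseteq> N3" "infinite Z'" for Z'
  proof -
    define Z where "Z = insert m0 Z'"
    have Z: "Z \<subseteq> N2" "infinite Z" using Z' N3 m0 by (auto simp: Z_def)
    have ZN: "Z \<subseteq> N" using Z N2N by blast
    have shZ: "shift Z = Z'" unfolding Z_def using gt Z' by (intro shift_insert) blast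
    have uZ: "u \<union> Z = u' \<union> Z'" by (auto simp: Z_def u'_def)
    have pZ: "sigB B (u \<union> Z) = u \<union> pre Z" "pre Z \<in> Fu" "sigB B (u \<union> Z) \<in> B" using preX[OF ZN Z(2)] sigX[OF ZN Z(2)] by blast+
    have lm: "(LEAST n. n \<in> Z) = m0"
      unfolding Z_def using gt Z' by (intro Least_equality) (auto simp: less_imp_le)
    have m0p: "m0 \<in> pre Z" using least_pre[OF ZN Z(2)] lm by simp
    have "h (sigB B (u \<union> Z')) = p (pre Z)" using keq[OF Z] shZ by simp
    moreover have "(u \<union> pre Z) - u = pre Z" using Fu_disj[OF pZ(2)] by blast
    ultimately have e1: "h (sigB B (u \<union> Z')) = h' (sigB B (u' \<union> Z'))" using pZ(1) uZ by (simp add: h'_def)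
    have sub: "u' \<subseteq> sigB B (u' \<union> Z')" using pZ(1) uZ m0p by (auto simp: u'_def)
    have "sigB B (u' \<union> Z') \<subseteq> u' \<union> Z'" using sigX[OF ZN Z(2)] uZ init_seg_subset by metis
    hence "init_seg u' (sigB B (u' \<union> Z'))" using init_seg_sub[OF segu'[OF Z'(1)] sub] by blast
    thus ?thesis using e1 sub pZ(3) uZ by simp
  qed
  show ?thesis
  proof (cases "u' \<in> B")
    case True
    have const: "h (sigB B (u \<union> Z')) = h' u'" if "Z' \<subseteq> N3" "infinite Z'" for Z'
      using EQ[OF that] sig_unique[OF True segu'[OF that(1)]] by simp
    have "shift N3 \<subseteq> N3" "infinite (shift N3)" using shift_sub infinite_shift N3(2) by blast+
    hence "h (sigB B (u \<union> shift N3)) = h' u'" using const by blast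
    moreover have "h (sigB B (u \<union> N3)) = h' u'" using const N3 by blast
    ultimately show ?thesis using bad[OF N3N N3(2)] by simp
  next
    case False
    have ndu': "nodeB B u'"
    proof -
      have "u' \<noteq> sigB B (u' \<union> N3)" using EQ[OF order_refl N3(2)] False by metis
      thus ?thesis using EQ[OF order_refl N3(2)] unfolding nodeB_def by blast
    qed
    have Ru: "(u', u) \<in> R"
    proof -
      have "init_seg u u'" unfolding u'_def using abm0 init_seg_Un[of "{m0}" u] by (simp add: insert_commute)
      moreover have "u \<noteq> u'" using m0u by (auto simp: u'_def)
      ultimately show ?thesis using nd ndu' by (simp add: R_def)
    qed
    have ab3: "\<forall>n\<in>N3. above u' n"
    proof
      fix n assume "n \<in> N3"
      hence "m0 < n" "above u n" using gt abN N3N by blast+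
      thus "above u' n" by (auto simp: above_def u'_def)
    qed
    have bad3: "\<forall>X. X \<subseteq> N3 \<longrightarrow> infinite X \<longrightarrow> h' (sigB B (u' \<union> X)) \<in> P \<and> \<not> h' (sigB B (u' \<union> X)) \<le> h' (sigB B (u' \<union> shift X))"
    proof (intro allI impI)
      fix X assume X: "X \<subseteq> N3" "infinite X"
      have sX: "shift X \<subseteq> N3" "infinite (shift X)" using X shift_sub infinite_shift by blast+
      have XN: "X \<subseteq> N" using X N3N by blast
      show "h' (sigB B (u' \<union> X)) \<in> P \<and> \<not> h' (sigB B (u' \<union> X)) \<le> h' (sigB B (u' \<union> shift X))"
        using EQ[OF X] EQ[OF sX] vals[OF XN X(2)] bad[OF XN X(2)] by simp
    qed
    have "N3 \<subseteq> N0" using N3N NN0 by blast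
    thus ?thesis using Ru N3(2) ab3 bad3 by blast
  qed
qed

lemma reduce1:
  "\<exists>u' N' h'. (u', u) \<in> R \<and> infinite N' \<and> N' \<subseteq> N0 \<and> (\<forall>n\<in>N'. above u' n) \<and>
     (\<forall>X. X \<subseteq> N' \<longrightarrow> infinite X \<longrightarrow> h' (sigB B (u' \<union> X)) \<in> P \<and> \<not> h' (sigB B (u' \<union> X)) \<le> h' (sigB B (u' \<union> shift X)))"
proof -
  define F where "F = {s'. s' \<in> Fu \<and> \<not> principal_ideal (G s')}"
  have finF: "\<forall>t\<in>F. finite t" using Fu_fin by (auto simp: F_def)
  obtain N2 where N2: "N2 \<subseteq> N1" "infinite N2"
    and alt: "(\<forall>t\<in>F. \<not> t \<subseteq> N2) \<or> (\<forall>Y\<subseteq>N2. infinite Y \<longrightarrow> (\<exists>t\<in>F. init_seg t Y))"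
    using galvin[OF infN1 finF] by blast
  have N2N: "N2 \<subseteq> N" using N2 N1N by blast
  show ?thesis
  proof (cases "\<forall>t\<in>F. \<not> t \<subseteq> N2")
    case True
    have "principal_ideal (G (pre X))" if X: "X \<subseteq> N2" "infinite X" for X
    proof (rule ccontr)
      assume np: "\<not> principal_ideal (G (pre X))"
      have "pre X \<in> Fu" "init_seg (pre X) X" using preX[OF _ X(2)] X N2N by blast+
      hence "pre X \<in> F" "pre X \<subseteq> N2" using np X(1) init_seg_subset by (auto simp: F_def)
      thus False using True by blast
    qed
    thus ?thesis using caseB[OF N2] by blast
  next
    case False
    hence all: "\<forall>Y\<subseteq>N2. infinite Y \<longrightarrow> (\<exists>t\<in>F. init_seg t Y)" using alt by blast
    have "\<not> principal_ideal (G (pre X))" if X: "X \<subseteq> N2" "infinite X" for X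
    proof -
      obtain t where t: "t \<in> F" "init_seg t X" using all X by blast
      have XN: "X \<subseteq> N" using X N2N by blast
      have "pre X = t" using pre_eq[OF XN X(2)] t by (auto simp: F_def)
      thus ?thesis using t by (simp add: F_def)
    qed
    thus ?thesis using caseA[OF N2] by blast
  qed
qed

end

context bctx begin

lemma reduce:
  "\<exists>u' N' h'. (u', u) \<in> R \<and> infinite N' \<and> N' \<subseteq> N0 \<and> (\<forall>n\<in>N'. above u' n) \<and>
     (\<forall>X. X \<subseteq> N' \<longrightarrow> infinite X \<longrightarrow> h' (sigB B (u' \<union> X)) \<in> P \<and> \<not> h' (sigB B (u' \<union> X)) \<le> h' (sigB B (u' \<union> shift X)))"
proof -
  obtain N1 where N1: "N1 \<subseteq> N" "infinite N1" "\<forall>s'. finite s' \<longrightarrow> s' \<subseteq> N1 \<longrightarrow> Qf s' (tailS s' N1)"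
    using exN1 by blast
  interpret b1: bctx1 B P u N h N1
    by (unfold_locales) (use N1 in blast)+
  show ?thesis using b1.reduce1 .
qed

end

context bar begin

lemma main:
  fixes P :: "'a::order set"
  assumes wqo: "wqo_on P" and chain: "is_chain_incl (nonprincipal_ideals P)"
  shows "nodeB B u \<Longrightarrow> \<forall>N (h :: nat set \<Rightarrow> 'a). \<not> (infinite N \<and> N \<subseteq> N0 \<and> (\<forall>n\<in>N. above u n) \<and>
     (\<forall>X. X \<subseteq> N \<longrightarrow> infinite X \<longrightarrow> h (sigB B (u \<union> X)) \<in> P \<and> \<not> h (sigB B (u \<union> X)) \<le> h (sigB B (u \<union> shift X))))"
proof (induction u rule: wf_induct[OF wfR])
  case (1 u)
  show ?case
  proof (intro allI notI)
    fix N and h :: "nat set \<Rightarrow> 'a"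
    assume a: "infinite N \<and> N \<subseteq> N0 \<and> (\<forall>n\<in>N. above u n) \<and>
     (\<forall>X. X \<subseteq> N \<longrightarrow> infinite X \<longrightarrow> h (sigB B (u \<union> X)) \<in> P \<and> \<not> h (sigB B (u \<union> X)) \<le> h (sigB B (u \<union> shift X)))"
    interpret bc: bctx B P u N h
      by (unfold_locales) (use a wqo chain 1(2) in blast)+
    obtain u' N' h' where r: "(u', u) \<in> R" "infinite N'" "N' \<subseteq> N0" "\<forall>n\<in>N'. above u' n"
      "\<forall>X. X \<subseteq> N' \<longrightarrow> infinite X \<longrightarrow> h' (sigB B (u' \<union> X)) \<in> P \<and> \<not> h' (sigB B (u' \<union> X)) \<le> h' (sigB B (u' \<union> shift X))"
      using bc.reduce by blast
    have "nodeB B u'" using r(1) by (simp add: R_def)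
    thus False using 1(1) r by blast
  qed
qed

lemma shift_rel_sig:
  assumes X: "X \<subseteq> N0" "infinite X"
  shows "sigB B X \<lhd> sigB B (shift X)"
proof -
  define s where "s = sigB B X"
  have s: "s \<in> B" "init_seg s X" using sig[OF X] by (auto simp: s_def)
  have sX: "shift X \<subseteq> N0" "infinite (shift X)" using X shift_sub infinite_shift by blast+
  define t where "t = sigB B (shift X)"
  have t: "t \<in> B" "init_seg t (shift X)" using sig[OF sX] by (auto simp: t_def)
  define m where "m = (LEAST n. n \<in> X)"
  have mX: "m \<in> X" using least_in X(2) by (simp add: m_def)
  have mle: "m \<le> x" if "x \<in> X" for x using least_le that by (simp add: m_def)
  have shX: "shift X = X - {m}" by (simp add: shift_def m_def)
  have ms: "m \<in> s"
  proof -
    obtain x where x: "x \<in> s" using neB s(1) by blast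
    have xX: "x \<in> X" using x s(2) init_seg_subset by blast
    show ?thesis
    proof (cases "m = x")
      case True thus ?thesis using x by simp
    next
      case False
      hence "m < x" using mle xX by force
      thus ?thesis using init_seg_mem[OF s(2) x mX] by simp
    qed
  qed
  have tsub: "t \<subseteq> X - {m}" using init_seg_subset[OF t(2)] shX by simp
  define r where "r = insert m t"
  have fr: "finite r" using finB[OF t(1)] by (simp add: r_def)
  have mt: "m \<notin> t" using tsub by blast
  have Minr: "Min r = m"
    using fr tsub mle by (intro Min_eqI) (auto simp: r_def)
  have rt: "r - {Min r} = t" using Minr mt by (simp add: r_def)
  have rseg: "init_seg r X"
    unfolding init_seg_def
  proof (intro conjI ballI impI)
    show "r \<subseteq> X" using tsub mX by (auto simp: r_def)
    fix x y assume xy: "x \<in> r" "y \<in> X" "y < x"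
    show "y \<in> r"
    proof (cases "y = m")
      case True thus ?thesis by (simp add: r_def)
    next
      case False
      have "x \<noteq> m" using xy mle by force
      hence "x \<in> t" using xy(1) by (simp add: r_def)
      moreover have "y \<in> shift X" using xy(2) False shX by simp
      ultimately show ?thesis using init_seg_mem[OF t(2) _ _ xy(3)] by (simp add: r_def)
    qed
  qed
  have "\<not> r \<subseteq> s"
  proof
    assume "r \<subseteq> s"
    hence "t \<subseteq> s" by (simp add: r_def)
    hence "t = s" using antiB t(1) s(1) by blast
    thus False using ms mt by simp
  qed
  hence "s \<subseteq> r" using init_seg_comp[OF s(2) rseg] by blast
  hence "init_seg s r" using init_seg_sub[OF s(2) _ init_seg_subset[OF rseg]] by blast
  moreover have "s \<noteq> r" using \<open>\<not> r \<subseteq> s\<close> by blast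
  ultimately have "s \<lhd> t" unfolding shift_rel_def using fr rt by blast
  thus ?thesis by (simp add: s_def t_def)
qed

lemma infN0: "infinite N0"
proof
  assume "finite N0"
  hence "finite (Pow N0)" by simp
  moreover have "B \<subseteq> Pow N0" by blast
  ultimately show False using infB finite_subset by blast
qed

lemma node_empty: "nodeB B {}"
proof -
  obtain s where "s \<in> B" using infB by (metis finite.emptyI ex_in_conv)
  thus ?thesis using neB unfolding nodeB_def init_seg_def by blast
qed

end

theorem corollary1p5:
  fixes P :: "'a::order set"
  assumes "wqo_on P"
    and "is_chain_incl (nonprincipal_ideals P)"
  shows "bqo_on P"
  unfolding bqo_on_def
proof (intro allI impI)
  fix B :: "nat set set" and f :: "nat set \<Rightarrow> 'a"
  assume Bf: "barrier B \<and> f ` B \<subseteq> P"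
  interpret bar B using Bf by (unfold_locales) blast
  show "good_map B f"
  proof (rule ccontr)
    assume ng: "\<not> good_map B f"
    have "\<forall>X. X \<subseteq> \<Union>B \<longrightarrow> infinite X \<longrightarrow> f (sigB B ({} \<union> X)) \<in> P \<and> \<not> f (sigB B ({} \<union> X)) \<le> f (sigB B ({} \<union> shift X))"
    proof (intro allI impI)
      fix X assume X: "X \<subseteq> \<Union>B" "infinite X"
      have sX: "shift X \<subseteq> \<Union>B" "infinite (shift X)" using X shift_sub infinite_shift by blast+
      have "sigB B X \<in> B" "sigB B (shift X) \<in> B" using sig X sX by blast+
      moreover have "sigB B X \<lhd> sigB B (shift X)" using shift_rel_sig[OF X] .
      ultimately show "f (sigB B ({} \<union> X)) \<in> P \<and> \<not> f (sigB B ({} \<union> X)) \<le> f (sigB B ({} \<union> shift X))"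
        using ng Bf unfolding good_map_def by auto
    qed
    moreover have "\<forall>n\<in>\<Union>B. above {} n" by (simp add: above_def)
    ultimately show False
      using main[OF assms node_empty] infN0 by blast
  qed
qed

end
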